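(* DBS is complete and optimal: on every MAPF-DL instance, and for every choice of tie-breaking and of the groups selected for merging or splitting, DBS terminates and returns a solution whose number of unsuccessful agents is the minimum over all solutions of the instance.
   Context: MAPF-DL. An instance consists of a deadline $T_{\mathrm{end}}\in\mathbb{N}$, a finite undirected graph $G=(V,E)$, and $M$ agents $a_1,\dots,a_M$; agent $a_i$ has a start vertex $s_i$ and a goal vertex $g_i$, and the graph distance from $s_i$ to $g_i$ is at most $T_{\mathrm{end}}$. A path for $a_i$ is a map $l_i:\{0,\dots,T_{\mathrm{end}}\}\to V$ with $l_i(0)=s_i$, $l_i(T_{\mathrm{end}})=g_i$, and for each $t\ge1$ either $(l_i(t-1),l_i(t))\in E$ or $l_i(t-1)=l_i(t)$. A plan assigns a path to each agent of some subset (the successful agents); the others are unsuccessful and get no path. Two distinct successful agents collide if they occupy the same vertex at the same time step, or traverse the same edge in opposite directions between time steps $t$ and $t+1$. A solution is a plan with no collisions; its cost is the number of unsuccessful agents. A set (group) $\gamma$ of agents is consistent if there is a solution in which every agent of $\gamma$ is successful and all other agents are unsuccessful (the empty group is consistent). DBS assumes an exact oracle deciding consistency and, for consistent $\gamma$, producing such a solution. Algorithm DBS (Death-Based Search). Best-first search over a death tree (DT); each DT node $N$ has a collection $N.\mathrm{live}$ of pairwise disjoint groups of agents and a cost $N.\mathrm{cost}$ (number of agents declared unsuccessful). The root has $\mathrm{live}=\{\{a_1\},\dots,\{a_M\}\}$ and cost $0$; OPEN initially contains the root. Repeat: remove from OPEN a node $N$ of minimum cost (ties arbitrary). If all groups of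 $N.\mathrm{live}$ are consistent: if $N.\mathrm{live}$ consists of a single group $\gamma$, return a solution in which exactly the agents of $\gamma$ are successful; otherwise create one child $N'$ with $N'.\mathrm{live}=(N.\mathrm{live}\setminus\{\gamma_1,\gamma_2\})\cup\{\gamma_1\cup\gamma_2\}$, where $\gamma_1\neq\gamma_2$ are two groups of smallest size in $N.\mathrm{live}$ (ties arbitrary), and $N'.\mathrm{cost}=N.\mathrm{cost}$, and insert it into OPEN. Otherwise, let $\gamma$ be an inconsistent group of $N.\mathrm{live}$; for each agent $a_i\in\gamma$ create a child $N'$ with $N'.\mathrm{live}=(N.\mathrm{live}\setminus\{\gamma\})\cup\{\gamma\setminus\{a_i\}\}$ and $N'.\mathrm{cost}=N.\mathrm{cost}+1$, and insert it into OPEN. *)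

theory Defs
  imports Main "HOL-Library.Multiset"
begin

text \<open>Agents a_1..a_M are represented by
  the indices 0..<M; agent i has start s i and goal g i.\<close>

definition undirected_graph :: "'v set \<Rightarrow> ('v \<times> 'v) set \<Rightarrow> bool" where
  "undirected_graph V E \<longleftrightarrow> finite V \<and> E \<subseteq> V \<times> V \<and> (\<forall>u w. (u, w) \<in> E \<longrightarrow> (w, u) \<in> E)"

definition dist_le :: "('v \<times> 'v) set \<Rightarrow> 'v \<Rightarrow> 'v \<Rightarrow> nat \<Rightarrow> bool" where
  "dist_le E u w k \<longleftrightarrow>
     (\<exists>ps. ps \<noteq> [] \<and> hd ps = u \<and> last ps = w \<and> length ps \<le> Suc k \<and>
           (\<forall>i. Suc i < length ps \<longrightarrow> (ps ! i, ps ! Suc i) \<in> E))"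

definition mapf_instance ::
  "'v set \<Rightarrow> ('v \<times> 'v) set \<Rightarrow> nat \<Rightarrow> nat \<Rightarrow> (nat \<Rightarrow> 'v) \<Rightarrow> (nat \<Rightarrow> 'v) \<Rightarrow> bool" where
  "mapf_instance V E T M s g \<longleftrightarrow> undirected_graph V E \<and>
     (\<forall>i<M. s i \<in> V \<and> g i \<in> V \<and> dist_le E (s i) (g i) T)"

text \<open>A path from u to w with deadline T (only the values at times 0..T matter).\<close>
definition is_path ::
  "'v set \<Rightarrow> ('v \<times> 'v) set \<Rightarrow> nat \<Rightarrow> 'v \<Rightarrow> 'v \<Rightarrow> (nat \<Rightarrow> 'v) \<Rightarrow> bool" where
  "is_path V E T u w l \<longleftrightarrow> l 0 = u \<and> l T = w \<and> (\<forall>t\<le>T. l t \<in> V) \<and>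
     (\<forall>t. 1 \<le> t \<and> t \<le> T \<longrightarrow> (l (t - 1), l t) \<in> E \<or> l (t - 1) = l t)"

definition collide :: "('v \<times> 'v) set \<Rightarrow> nat \<Rightarrow> (nat \<Rightarrow> 'v) \<Rightarrow> (nat \<Rightarrow> 'v) \<Rightarrow> bool" where
  "collide E T l1 l2 \<longleftrightarrow>
     (\<exists>t\<le>T. l1 t = l2 t) \<or>
     (\<exists>t<T. (l1 t, l1 (Suc t)) \<in> E \<and> l1 t = l2 (Suc t) \<and> l1 (Suc t) = l2 t)"

text \<open>A plan is a partial map from agents to paths; its domain is the set of successful agents.\<close>
type_synonym 'v plan = "nat \<Rightarrow> (nat \<Rightarrow> 'v) option"

definition is_solution ::
  "'v set \<Rightarrow> ('v \<times> 'v) set \<Rightarrow> nat \<Rightarrow> nat \<Rightarrow> (nat \<Rightarrow> 'v) \<Rightarrow> (nat \<Rightarrow> 'v) \<Rightarrow> 'v plan \<Rightarrow> bool" where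
  "is_solution V E T M s g P \<longleftrightarrow> dom P \<subseteq> {..<M} \<and>
     (\<forall>i l. P i = Some l \<longrightarrow> is_path V E T (s i) (g i) l) \<and>
     (\<forall>i j li lj. i \<noteq> j \<longrightarrow> P i = Some li \<longrightarrow> P j = Some lj \<longrightarrow> \<not> collide E T li lj)"

definition plan_cost :: "nat \<Rightarrow> 'v plan \<Rightarrow> nat" where
  "plan_cost M P = card ({..<M} - dom P)"

definition consistent ::
  "'v set \<Rightarrow> ('v \<times> 'v) set \<Rightarrow> nat \<Rightarrow> nat \<Rightarrow> (nat \<Rightarrow> 'v) \<Rightarrow> (nat \<Rightarrow> 'v) \<Rightarrow> nat set \<Rightarrow> bool" where
  "consistent V E T M s g \<gamma> \<longleftrightarrow> (\<exists>P. is_solution V E T M s g P \<and> dom P = \<gamma>)"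

text \<open>A death-tree node: (live, cost), live being a collection (multiset) of groups.\<close>
type_synonym dt_node = "nat set multiset \<times> nat"

datatype 'v dbs_state = Running "dt_node multiset" | Done "'v plan"

definition dbs_init :: "nat \<Rightarrow> 'v dbs_state" where
  "dbs_init M = Running {# (image_mset (\<lambda>i. {i}) (mset_set {..<M}), 0) #}"

text \<open>One iteration of the main loop. All choices (which minimum-cost node, which smallest
  groups, which inconsistent group, which oracle solution) are nondeterministic.\<close>
inductive dbs_step ::
  "'v set \<Rightarrow> ('v \<times> 'v) set \<Rightarrow> nat \<Rightarrow> nat \<Rightarrow> (nat \<Rightarrow> 'v) \<Rightarrow> (nat \<Rightarrow> 'v)
   \<Rightarrow> 'v dbs_state \<Rightarrow> 'v dbs_state \<Rightarrow> bool"
  for V E T M s g where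
  return:
    "\<lbrakk> N \<in># Op; \<forall>N'\<in>#Op. snd N \<le> snd N';
       \<forall>\<gamma>\<in>#fst N. consistent V E T M s g \<gamma>;
       fst N = {#\<gamma>#}; is_solution V E T M s g P; dom P = \<gamma> \<rbrakk>
     \<Longrightarrow> dbs_step V E T M s g (Running Op) (Done P)"
| merge:
    "\<lbrakk> N \<in># Op; \<forall>N'\<in>#Op. snd N \<le> snd N';
       \<forall>\<gamma>\<in>#fst N. consistent V E T M s g \<gamma>;
       size (fst N) \<noteq> 1;
       \<gamma>1 \<in># fst N; \<forall>\<delta>\<in>#fst N. card \<gamma>1 \<le> card \<delta>;
       \<gamma>2 \<in># fst N - {#\<gamma>1#}; \<forall>\<delta>\<in>#fst N - {#\<gamma>1#}. card \<gamma>2 \<le> card \<delta> \<rbrakk>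
     \<Longrightarrow> dbs_step V E T M s g (Running Op)
           (Running (Op - {#N#} + {# (fst N - {#\<gamma>1, \<gamma>2#} + {#\<gamma>1 \<union> \<gamma>2#}, snd N) #}))"
| split:
    "\<lbrakk> N \<in># Op; \<forall>N'\<in>#Op. snd N \<le> snd N';
       \<gamma> \<in># fst N; \<not> consistent V E T M s g \<gamma> \<rbrakk>
     \<Longrightarrow> dbs_step V E T M s g (Running Op)
           (Running (Op - {#N#} +
              image_mset (\<lambda>a. (fst N - {#\<gamma>#} + {#\<gamma> - {a}#}, Suc (snd N))) (mset_set \<gamma>)))"

end

theory Submission
  imports Defs
begin

definition disj :: "nat set multiset \<Rightarrow> bool" where
  "disj L \<longleftrightarrow> (\<forall>x\<in>#L. \<forall>y\<in>#L - {#x#}. x \<inter> y = {})"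

lemma disj_empty[simp]: "disj {#}"
  by (simp add: disj_def)

lemma disj_add: "disj (add_mset x L) \<longleftrightarrow> disj L \<and> (\<forall>y\<in>#L. x \<inter> y = {})"
proof
  assume d: "disj (add_mset x L)"
  have 1: "\<forall>y\<in>#L. x \<inter> y = {}" using d by (simp add: disj_def)
  have 2: "disj L"
    unfolding disj_def
  proof (intro ballI)
    fix x' y assume x': "x' \<in># L" and y: "y \<in># L - {#x'#}"
    have "y \<in># add_mset x L - {#x'#}"
      using x' y by (cases "x = x'") (auto simp: diff_add_mset_swap dest: in_diffD)
    moreover have "x' \<in># add_mset x L" using x' by simp
    ultimately show "x' \<inter> y = {}" using d unfolding disj_def by blast
  qed
  show "disj L \<and> (\<forall>y\<in>#L. x \<inter> y = {})" using 1 2 by blast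
next
  assume a: "disj L \<and> (\<forall>y\<in>#L. x \<inter> y = {})"
  show "disj (add_mset x L)"
    unfolding disj_def
  proof (intro ballI)
    fix x' y assume x': "x' \<in># add_mset x L" and y: "y \<in># add_mset x L - {#x'#}"
    show "x' \<inter> y = {}"
    proof (cases "x' = x")
      case True
      then show ?thesis using a y by auto
    next
      case False
      then have x'L: "x' \<in># L" using x' by auto
      have "add_mset x L - {#x'#} = add_mset x (L - {#x'#})"
        using False by (simp add: diff_add_mset_swap)
      then have "y = x \<or> y \<in># L - {#x'#}" using y by auto
      then show ?thesis using a x'L unfolding disj_def by auto
    qed
  qed
qed

definition inv_node :: "nat \<Rightarrow> dt_node \<Rightarrow> bool" where
  "inv_node M N \<longleftrightarrow> (\<forall>\<gamma>\<in>#fst N. \<gamma> \<subseteq> {..<M}) \<and> disj (fst N) \<and>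
     snd N + card (\<Union>(set_mset (fst N))) = M \<and> fst N \<noteq> {#}"

definition wt :: "dt_node \<Rightarrow> nat" where
  "wt N = size (fst N) + card (\<Union>(set_mset (fst N)))"

fun ops :: "'v dbs_state \<Rightarrow> dt_node multiset" where
  "ops (Running Op) = Op" | "ops (Done P) = {#}"

lemma no_step_done: "\<not> dbs_step V E T M s g (Done P) S'"
  by (auto elim: dbs_step.cases)

lemma consistent_subset:
  assumes "consistent V E T M s g D" "\<gamma> \<subseteq> D"
  shows "consistent V E T M s g \<gamma>"
proof -
  obtain P where P: "is_solution V E T M s g P" "dom P = D"
    using assms(1) by (auto simp: consistent_def)
  have "is_solution V E T M s g (P |` \<gamma>)"
    using P(1) unfolding is_solution_def restrict_map_def
    by (auto split: if_splits simp: dom_def)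
  moreover have "dom (P |` \<gamma>) = \<gamma>" using P assms(2) by auto
  ultimately show ?thesis unfolding consistent_def by blast
qed

lemma consistent_dom: "consistent V E T M s g D \<Longrightarrow> D \<subseteq> {..<M}"
  by (auto simp: consistent_def is_solution_def)

lemma consistent_empty: "consistent V E T M s g {}"
  unfolding consistent_def is_solution_def
  by (rule exI[of _ Map.empty]) auto


lemma merge_node:
  assumes inv: "inv_node M N" and g1: "\<gamma>1 \<in># fst N" and g2: "\<gamma>2 \<in># fst N - {#\<gamma>1#}"
  defines "N' \<equiv> (fst N - {#\<gamma>1, \<gamma>2#} + {#\<gamma>1 \<union> \<gamma>2#}, snd N)"
  shows "inv_node M N' \<and> \<Union>(set_mset (fst N')) = \<Union>(set_mset (fst N)) \<and> wt N' < wt N"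
proof -
  obtain L1 where L1: "fst N - {#\<gamma>1#} = add_mset \<gamma>2 L1" using g2 by (metis multi_member_split)
  have L: "fst N = add_mset \<gamma>1 (add_mset \<gamma>2 L1)" using g1 L1 by (metis insert_DiffM)
  have N': "fst N' = add_mset (\<gamma>1 \<union> \<gamma>2) L1" unfolding N'_def using L by simp
  have sN': "snd N' = snd N" unfolding N'_def by simp
  have U: "\<Union>(set_mset (fst N')) = \<Union>(set_mset (fst N))" using N' L by auto
  have d: "disj (fst N)" and sub: "\<forall>\<gamma>\<in>#fst N. \<gamma> \<subseteq> {..<M}"
    and c: "snd N + card (\<Union>(set_mset (fst N))) = M" using inv by (auto simp: inv_node_def)
  have "disj (fst N')" using d unfolding N' L by (auto simp: disj_add)
  moreover have "\<forall>\<gamma>\<in>#fst N'. \<gamma> \<subseteq> {..<M}" using sub unfolding N' L by auto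
  ultimately have "inv_node M N'" using c U sN' N' unfolding inv_node_def by auto
  moreover have "wt N' < wt N" unfolding wt_def using U N' L by simp
  ultimately show ?thesis using U by blast
qed

lemma split_node:
  assumes inv: "inv_node M N" and g: "\<gamma> \<in># fst N" and a: "a \<in> \<gamma>"
  defines "N' \<equiv> (fst N - {#\<gamma>#} + {#\<gamma> - {a}#}, Suc (snd N))"
  shows "inv_node M N' \<and> \<Union>(set_mset (fst N')) = \<Union>(set_mset (fst N)) - {a} \<and> wt N' < wt N"
proof -
  obtain L0 where L: "fst N = add_mset \<gamma> L0" using g by (metis multi_member_split)
  have N': "fst N' = add_mset (\<gamma> - {a}) L0" unfolding N'_def using L by simp
  have sN': "snd N' = Suc (snd N)" unfolding N'_def by simp
  have d: "disj (fst N)" and sub: "\<forall>\<gamma>\<in>#fst N. \<gamma> \<subseteq> {..<M}"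
    and c: "snd N + card (\<Union>(set_mset (fst N))) = M" using inv by (auto simp: inv_node_def)
  have dj: "\<forall>y\<in>#L0. \<gamma> \<inter> y = {}" using d L by (simp add: disj_add)
  have U: "\<Union>(set_mset (fst N')) = \<Union>(set_mset (fst N)) - {a}"
    using N' L dj a by auto
  have fin: "finite (\<Union>(set_mset (fst N)))" using sub
    by (meson Sup_least finite_lessThan finite_subset)
  have ain: "a \<in> \<Union>(set_mset (fst N))" using a g by blast
  have cardU: "card (\<Union>(set_mset (fst N'))) = card (\<Union>(set_mset (fst N))) - 1"
    using U fin ain by simp
  have pos: "card (\<Union>(set_mset (fst N))) > 0" using fin ain card_gt_0_iff by blast
  have "disj (fst N')" using d unfolding N' L by (auto simp: disj_add)
  moreover have "\<forall>\<gamma>\<in>#fst N'. \<gamma> \<subseteq> {..<M}" using sub unfolding N' L by auto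
  ultimately have "inv_node M N'" using c cardU pos sN' N' unfolding inv_node_def by auto
  moreover have "wt N' < wt N" unfolding wt_def using cardU pos N' L by simp
  ultimately show ?thesis using U by blast
qed

context
  fixes V :: "'v set" and E :: "('v \<times> 'v) set" and T M :: nat and s g :: "nat \<Rightarrow> 'v"
begin

definition covers :: "dt_node multiset \<Rightarrow> bool" where
  "covers Op \<longleftrightarrow> (\<forall>D. consistent V E T M s g D \<longrightarrow> (\<exists>N\<in>#Op. D \<subseteq> \<Union>(set_mset (fst N))))"

definition Inv :: "dt_node multiset \<Rightarrow> bool" where
  "Inv Op \<longleftrightarrow> (\<forall>N\<in>#Op. inv_node M N) \<and> covers Op"

fun good :: "'v dbs_state \<Rightarrow> bool" where
  "good (Running Op) = Inv Op"
| "good (Done P) = (is_solution V E T M s g P \<and>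
      (\<forall>P'. is_solution V E T M s g P' \<longrightarrow> plan_cost M P \<le> plan_cost M P'))"


lemma init_good:
  assumes "0 < M" shows "good (dbs_init M)"
proof -
  define L where "L = image_mset (\<lambda>i. {i}) (mset_set {..<M})"
  have dL: "disj (image_mset (\<lambda>i. {i}) (mset_set {..<n}))" for n
  proof (induction n)
    case 0 then show ?case by simp
  next
    case (Suc n)
    have "mset_set {..<Suc n} = add_mset n (mset_set {..<n})"
      by (simp add: lessThan_Suc)
    then show ?case using Suc by (auto simp: disj_add)
  qed
  have U: "\<Union>(set_mset L) = {..<M}" unfolding L_def by auto
  have ne: "L \<noteq> {#}" unfolding L_def using assms
    by (metis finite_lessThan image_mset_is_empty_iff lessThan_iff mset_set_empty_iff empty_iff)
  have "inv_node M (L, 0)" unfolding inv_node_def using U ne dL[of M]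
    by (auto simp: L_def)
  moreover have "covers {#(L, 0)#}" unfolding covers_def using U by (auto dest: consistent_dom)
  ultimately show ?thesis by (simp add: dbs_init_def L_def Inv_def)
qed

lemma step_good:
  assumes st: "dbs_step V E T M s g S S'" and gS: "good S"
  shows "good S'"
  using st
proof cases
  case (return N Op \<gamma> P)
  have I: "Inv Op" using gS return by simp
  have invN: "inv_node M N" using I return by (auto simp: Inv_def)
  have opt: "plan_cost M P \<le> plan_cost M P'" if P': "is_solution V E T M s g P'" for P'
  proof -
    define D where "D = dom P'"
    have cD: "consistent V E T M s g D" using P' unfolding consistent_def D_def by blast
    then obtain W where W: "W \<in># Op" "D \<subseteq> \<Union>(set_mset (fst W))"
      using I by (auto simp: Inv_def covers_def)
    have invW: "inv_node M W" using I W by (auto simp: Inv_def)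
    have subW: "\<Union>(set_mset (fst W)) \<subseteq> {..<M}" using invW by (auto simp: inv_node_def)
    have cW: "snd W + card (\<Union>(set_mset (fst W))) = M" using invW by (auto simp: inv_node_def)
    have "card D \<le> card (\<Union>(set_mset (fst W)))"
      using W(2) subW by (meson card_mono finite_lessThan finite_subset)
    moreover have "snd N \<le> snd W" using return W by auto
    moreover have cN: "snd N + card \<gamma> = M" using invN return by (auto simp: inv_node_def)
    moreover have gsub: "\<gamma> \<subseteq> {..<M}" using invN return by (auto simp: inv_node_def)
    moreover have "plan_cost M P = M - card \<gamma>"
      unfolding plan_cost_def using return gsub by (simp add: card_Diff_subset finite_subset)
    moreover have "plan_cost M P' = M - card D"
      unfolding plan_cost_def D_def using consistent_dom[OF cD] D_def
      by (simp add: card_Diff_subset finite_subset)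
    moreover note cW
    ultimately show ?thesis by linarith
  qed
  show ?thesis using return opt by simp
next
  case (merge N Op \<gamma>1 \<gamma>2)
  have I: "Inv Op" using gS merge by simp
  define N' where "N' = (fst N - {#\<gamma>1, \<gamma>2#} + {#\<gamma>1 \<union> \<gamma>2#}, snd N)"
  have invN: "inv_node M N" using I merge by (auto simp: Inv_def)
  have mn: "inv_node M N' \<and> \<Union>(set_mset (fst N')) = \<Union>(set_mset (fst N))"
    using merge_node[OF invN merge(7) merge(9)] unfolding N'_def by blast
  have "\<forall>X\<in>#Op - {#N#} + {#N'#}. inv_node M X"
    using I mn by (auto simp: Inv_def dest: in_diffD)
  moreover have "covers (Op - {#N#} + {#N'#})"
    unfolding covers_def
  proof (intro allI impI)
    fix D assume "consistent V E T M s g D"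
    then obtain W where W: "W \<in># Op" "D \<subseteq> \<Union>(set_mset (fst W))"
      using I by (auto simp: Inv_def covers_def)
    show "\<exists>X\<in>#Op - {#N#} + {#N'#}. D \<subseteq> \<Union>(set_mset (fst X))"
    proof (cases "W = N")
      case True then show ?thesis using W mn by auto
    next
      case False then show ?thesis using W by (auto simp: in_diff_count)
    qed
  qed
  ultimately show ?thesis using merge N'_def by (simp add: Inv_def)
next
  case (split N Op \<gamma>)
  have I: "Inv Op" using gS split by simp
  have invN: "inv_node M N" using I split by (auto simp: Inv_def)
  define ch where "ch = (\<lambda>a. (fst N - {#\<gamma>#} + {#\<gamma> - {a}#}, Suc (snd N)))"
  have fin: "finite \<gamma>" using invN split
    by (meson finite_lessThan finite_subset inv_node_def)
  have sn: "inv_node M (ch a) \<and> \<Union>(set_mset (fst (ch a))) = \<Union>(set_mset (fst N)) - {a}"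
    if "a \<in> \<gamma>" for a
    using split_node[OF invN split(5) that] unfolding ch_def by blast
  have "\<forall>X\<in>#Op - {#N#} + image_mset ch (mset_set \<gamma>). inv_node M X"
    using I sn fin by (auto simp: Inv_def dest: in_diffD)
  moreover have "covers (Op - {#N#} + image_mset ch (mset_set \<gamma>))"
    unfolding covers_def
  proof (intro allI impI)
    fix D assume cD: "consistent V E T M s g D"
    then obtain W where W: "W \<in># Op" "D \<subseteq> \<Union>(set_mset (fst W))"
      using I by (auto simp: Inv_def covers_def)
    show "\<exists>X\<in>#Op - {#N#} + image_mset ch (mset_set \<gamma>). D \<subseteq> \<Union>(set_mset (fst X))"
    proof (cases "W = N")
      case True
      have "\<not> \<gamma> \<subseteq> D" using split(6) consistent_subset cD by blast
      then obtain a where a: "a \<in> \<gamma>" "a \<notin> D" by blast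
      have "ch a \<in># image_mset ch (mset_set \<gamma>)" using a fin by simp
      moreover have "D \<subseteq> \<Union>(set_mset (fst (ch a)))" using sn[OF a(1)] W True a by auto
      ultimately show ?thesis by auto
    next
      case False then show ?thesis using W by (auto simp: in_diff_count)
    qed
  qed
  ultimately show ?thesis using split ch_def by (simp add: Inv_def)
qed


lemma mult1_intro: "\<forall>b\<in>#K. (b, a) \<in> r \<Longrightarrow> (M0 + K, add_mset a M0) \<in> mult1 r"
  unfolding mult1_def by blast

lemma step_dec:
  assumes st: "dbs_step V E T M s g (Running Op) (Running Op')" and I: "Inv Op"
  shows "(image_mset wt Op', image_mset wt Op) \<in> mult1 less_than"
  using st
proof cases
  case (merge N \<gamma>1 \<gamma>2)
  have invN: "inv_node M N" using I merge by (auto simp: Inv_def)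
  have lt: "wt (fst N - {#\<gamma>1, \<gamma>2#} + {#\<gamma>1 \<union> \<gamma>2#}, snd N) < wt N"
    using merge_node[OF invN \<open>\<gamma>1 \<in># fst N\<close> \<open>\<gamma>2 \<in># fst N - {#\<gamma>1#}\<close>] by blast
  obtain Op0 where Op: "Op = add_mset N Op0" using \<open>N \<in># Op\<close> by (metis multi_member_split)
  have e1: "image_mset wt Op = add_mset (wt N) (image_mset wt Op0)" by (simp add: Op)
  have e2: "image_mset wt Op' = image_mset wt Op0 + {#wt (fst N - {#\<gamma>1, \<gamma>2#} + {#\<gamma>1 \<union> \<gamma>2#}, snd N)#}"
    by (simp add: merge Op)
  show ?thesis unfolding e1 e2 by (rule mult1_intro) (use lt in auto)
next
  case (split N \<gamma>)
  have invN: "inv_node M N" using I split by (auto simp: Inv_def)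
  have fin: "finite \<gamma>" using invN split
    by (meson finite_lessThan finite_subset inv_node_def)
  have lt: "wt (fst N - {#\<gamma>#} + {#\<gamma> - {a}#}, Suc (snd N)) < wt N" if "a \<in> \<gamma>" for a
    using split_node[OF invN \<open>\<gamma> \<in># fst N\<close> that] by blast
  obtain Op0 where Op: "Op = add_mset N Op0" using \<open>N \<in># Op\<close> by (metis multi_member_split)
  have e1: "image_mset wt Op = add_mset (wt N) (image_mset wt Op0)" by (simp add: Op)
  have e2: "image_mset wt Op' = image_mset wt Op0 +
      image_mset (\<lambda>a. wt (fst N - {#\<gamma>#} + {#\<gamma> - {a}#}, Suc (snd N))) (mset_set \<gamma>)"
    by (simp add: split Op image_mset.compositionality o_def)
  show ?thesis unfolding e1 e2 by (rule mult1_intro) (use lt fin in auto)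
qed

lemma progress:
  assumes I: "Inv Op" shows "\<exists>S'. dbs_step V E T M s g (Running Op) S'"
proof -
  obtain W where "W \<in># Op" using I consistent_empty[of V E T M s g] by (auto simp: Inv_def covers_def)
  then have ne: "set_mset Op \<noteq> {}" by auto
  define m where "m = Min (snd ` set_mset Op)"
  have "m \<in> snd ` set_mset Op" unfolding m_def using ne by simp
  then obtain N where N: "N \<in># Op" "snd N = m" by auto
  have minN: "\<forall>N'\<in>#Op. snd N \<le> snd N'" using N unfolding m_def by simp
  have invN: "inv_node M N" using I N by (auto simp: Inv_def)
  show ?thesis
  proof (cases "\<exists>\<gamma>\<in>#fst N. \<not> consistent V E T M s g \<gamma>")
    case True
    then obtain \<gamma> where "\<gamma> \<in># fst N" "\<not> consistent V E T M s g \<gamma>" by blast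
    then show ?thesis using dbs_step.split[OF N(1) minN] by blast
  next
    case False
    then have cons: "\<forall>\<gamma>\<in>#fst N. consistent V E T M s g \<gamma>" by blast
    show ?thesis
    proof (cases "size (fst N) = 1")
      case True
      then obtain \<gamma> where g: "fst N = {#\<gamma>#}" using size_1_singleton_mset by blast
      then obtain P where "is_solution V E T M s g P" "dom P = \<gamma>"
        using cons by (auto simp: consistent_def)
      then show ?thesis using dbs_step.return[OF N(1) minN cons g] by blast
    next
      case False
      have ne1: "fst N \<noteq> {#}" using invN by (simp add: inv_node_def)
      define m1 where "m1 = Min (card ` set_mset (fst N))"
      have "m1 \<in> card ` set_mset (fst N)" unfolding m1_def using ne1 by simp
      then obtain \<gamma>1 where g1: "\<gamma>1 \<in># fst N" "card \<gamma>1 = m1" by auto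
      have min1: "\<forall>\<delta>\<in>#fst N. card \<gamma>1 \<le> card \<delta>" using g1 unfolding m1_def by simp
      have "size (fst N - {#\<gamma>1#}) = size (fst N) - 1" using g1 by (simp add: size_Diff_submset)
      moreover have "size (fst N) \<noteq> 0" using ne1 by simp
      ultimately have "size (fst N - {#\<gamma>1#}) \<noteq> 0" using False by linarith
      then have ne2: "fst N - {#\<gamma>1#} \<noteq> {#}" by auto
      define m2 where "m2 = Min (card ` set_mset (fst N - {#\<gamma>1#}))"
      have "m2 \<in> card ` set_mset (fst N - {#\<gamma>1#})" unfolding m2_def using ne2 by simp
      then obtain \<gamma>2 where g2: "\<gamma>2 \<in># fst N - {#\<gamma>1#}" "card \<gamma>2 = m2" by auto
      have min2: "\<forall>\<delta>\<in>#fst N - {#\<gamma>1#}. card \<gamma>2 \<le> card \<delta>" using g2 unfolding m2_def by simp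
      show ?thesis using dbs_step.merge[OF N(1) minN cons False g1(1) min1 g2(1) min2] by blast
    qed
  qed
qed

end

theorem theorem3:
  fixes V :: "'v set" and E :: "('v \<times> 'v) set" and T M :: nat and s g :: "nat \<Rightarrow> 'v"
  assumes "mapf_instance V E T M s g" and "0 < M"
  shows "\<not> (\<exists>f. f 0 = dbs_init M \<and> (\<forall>n. dbs_step V E T M s g (f n) (f (Suc n)))) \<and>
         (\<forall>S. (dbs_step V E T M s g)\<^sup>*\<^sup>* (dbs_init M) S \<and> (\<nexists>S'. dbs_step V E T M s g S S') \<longrightarrow>
           (\<exists>P. S = Done P \<and> is_solution V E T M s g P \<and>
                (\<forall>P'. is_solution V E T M s g P' \<longrightarrow> plan_cost M P \<le> plan_cost M P')))"
proof (intro conjI allI impI)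
  show "\<not> (\<exists>f. f 0 = dbs_init M \<and> (\<forall>n. dbs_step V E T M s g (f n) (f (Suc n))))"
  proof
    assume "\<exists>f. f 0 = dbs_init M \<and> (\<forall>n. dbs_step V E T M s g (f n) (f (Suc n)))"
    then obtain f where f0: "f 0 = dbs_init M" and fs: "\<And>n. dbs_step V E T M s g (f n) (f (Suc n))"
      by blast
    have gd: "good V E T M s g (f n)" for n
    proof (induction n)
      case 0 then show ?case using f0 init_good assms(2) by simp
    next
      case (Suc n) then show ?case using step_good fs by blast
    qed
    have run: "f n = Running (ops (f n))" for n
      using fs[of n] by (cases "f n") (auto simp: no_step_done)
    have ch: "(image_mset wt (ops (f (Suc n))), image_mset wt (ops (f n))) \<in> mult1 less_than" for n
    proof -
      have "dbs_step V E T M s g (Running (ops (f n))) (Running (ops (f (Suc n))))"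
        using fs[of n] run[of n] run[of "Suc n"] by simp
      moreover have "Inv V E T M s g (ops (f n))" using gd[of n] run[of n]
        by (metis good.simps(1))
      ultimately show ?thesis by (rule step_dec)
    qed
    have "wf (mult1 less_than)" by (rule wf_mult1[OF wf_less_than])
    then have "\<nexists>h. \<forall>i. (h (Suc i), h i) \<in> mult1 less_than"
      unfolding wf_iff_no_infinite_down_chain .
    moreover have "\<exists>h. \<forall>i. (h (Suc i), h i) \<in> mult1 less_than"
      by (rule exI[of _ "\<lambda>n. image_mset wt (ops (f n))"]) (use ch in simp)
    ultimately show False by blast
  qed
next
  fix S assume a: "(dbs_step V E T M s g)\<^sup>*\<^sup>* (dbs_init M) S \<and> (\<nexists>S'. dbs_step V E T M s g S S')"
  have gS: "good V E T M s g S"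
    using a
  proof -
    have "(dbs_step V E T M s g)\<^sup>*\<^sup>* (dbs_init M) S" using a by blast
    then show ?thesis
    proof (induction rule: rtranclp_induct)
      case base then show ?case by (rule init_good[OF assms(2)])
    next
      case (step y z) then show ?case using step_good by blast
    qed
  qed
  show "\<exists>P. S = Done P \<and> is_solution V E T M s g P \<and>
           (\<forall>P'. is_solution V E T M s g P' \<longrightarrow> plan_cost M P \<le> plan_cost M P')"
  proof (cases S)
    case (Running Op)
    then have "Inv V E T M s g Op" using gS by simp
    then show ?thesis using progress a Running by blast
  next
    case (Done P)
    then show ?thesis using gS by simp
  qed
qed

end
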